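(* Let $d>1$ be a non-integer rational number and $\mu\ge\lceil d\rceil-1$ an integer. Then for every relation $R\in\{\le,<,\ge,>,=,\neq\}$, the discounted-sum comparator with discount factor $d$ for $R$ over the alphabet $\{0,\dots,\mu\}\times\{0,\dots,\mu\}$ — i.e. the set of pairs $(A,B)$ of sequences in $\{0,\dots,\mu\}^\omega$ with $\mathrm{DS}(A,d)\,R\,\mathrm{DS}(B,d)$ — is not $\omega$-regular (not accepted by any B\"uchi automaton reading $A$ and $B$ synchronously).
   Context: $\mathrm{DS}(A,d)=\sum_{i\ge0}A[i]/d^i$ for an infinite sequence $A$ and $d>1$. *)

theory Defs
  imports Complex_Main
begin

definition DS :: "(nat \<Rightarrow> nat) \<Rightarrow> real \<Rightarrow> real" where
  "DS A d = (\<Sum>i. real (A i) / d ^ i)"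

definition buchi_accepts ::
  "nat set \<Rightarrow> 'a set \<Rightarrow> nat set \<Rightarrow> (nat \<times> 'a \<times> nat) set \<Rightarrow> nat set \<Rightarrow> (nat \<Rightarrow> 'a) \<Rightarrow> bool" where
  "buchi_accepts Q Al I delta F w \<longleftrightarrow>
     (\<exists>r :: nat \<Rightarrow> nat. r 0 \<in> I \<and> (\<forall>i. (r i, w i, r (Suc i)) \<in> delta)
        \<and> (\<exists>\<^sub>\<infinity>i. r i \<in> F))"

definition omega_regular :: "'a set \<Rightarrow> ((nat \<Rightarrow> 'a) set) \<Rightarrow> bool" where
  "omega_regular Al L \<longleftrightarrow>
     (\<exists>Q I delta F. finite Q \<and> I \<subseteq> Q \<and> F \<subseteq> Q \<and> delta \<subseteq> Q \<times> Al \<times> Q \<and>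
        L = {w. (\<forall>i. w i \<in> Al) \<and> buchi_accepts Q Al I delta F w})"

definition DS_comparator :: "nat \<Rightarrow> real \<Rightarrow> (real \<Rightarrow> real \<Rightarrow> bool) \<Rightarrow> (nat \<Rightarrow> nat \<times> nat) set" where
  "DS_comparator mu d R =
     {w. (\<forall>i. w i \<in> {0..mu} \<times> {0..mu}) \<and> R (DS (fst \<circ> w) d) (DS (snd \<circ> w) d)}"

end

theory Submission imports Defs begin

definition dig :: "real \<Rightarrow> real \<Rightarrow> nat" where
  "dig d y = min (nat \<lfloor>d\<rfloor>) (nat \<lfloor>d * y\<rfloor>)"

fun gx :: "real \<Rightarrow> nat \<Rightarrow> real" where
  "gx d 0 = 1"
| "gx d (Suc n) = d * gx d n - real (dig d (gx d n))"

fun gb :: "real \<Rightarrow> nat \<Rightarrow> nat" where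
  "gb d 0 = 0"
| "gb d (Suc n) = dig d (gx d n)"

lemma gx_bounds:
  assumes "d > 1"
  shows "0 \<le> gx d n \<and> gx d n \<le> of_int \<lfloor>d\<rfloor> / (d - 1)"
proof (induction n)
  case 0
  have "d - 1 \<le> of_int \<lfloor>d\<rfloor>" by linarith
  then show ?case using assms by (simp add: field_simps)
next
  case (Suc n)
  define y where "y = gx d n"
  define a where "a = (of_int \<lfloor>d\<rfloor> :: real)"
  have y0: "0 \<le> y" and y1: "y \<le> a / (d - 1)" using Suc y_def a_def by auto
  have a1: "a \<ge> 1" using assms a_def by simp
  have ad: "d - 1 \<le> a" using a_def by linarith
  have dy0: "d * y \<ge> 0" using y0 assms by simp
  show ?case
  proof (cases "d * y < a")
    case True
    have fl: "\<lfloor>d * y\<rfloor> \<le> \<lfloor>d\<rfloor>" using True a_def by linarith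
    have "dig d y = nat \<lfloor>d * y\<rfloor>" unfolding dig_def using fl by simp
    hence e: "real (dig d y) = of_int \<lfloor>d * y\<rfloor>" using dy0 by simp
    have "d * y - of_int \<lfloor>d * y\<rfloor> < 1" by linarith
    moreover have "1 \<le> a / (d - 1)" using ad assms by (simp add: field_simps)
    ultimately show ?thesis using e y_def a_def by simp
  next
    case False
    have fl: "\<lfloor>d * y\<rfloor> \<ge> \<lfloor>d\<rfloor>" using False a_def by linarith
    have "dig d y = nat \<lfloor>d\<rfloor>" unfolding dig_def using fl by simp
    hence e: "real (dig d y) = a" using a_def assms by simp
    have "d * y - a \<le> a / (d - 1)"
    proof -
      have "d * y \<le> d * (a / (d - 1))" using y1 assms by (intro mult_left_mono) auto
      also have "d * (a / (d - 1)) = a + a / (d - 1)" using assms by (simp add: field_simps)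
      finally show ?thesis by simp
    qed
    then show ?thesis using e y_def a_def False by simp
  qed
qed

lemma gb_le: "gb d n \<le> nat \<lfloor>d\<rfloor>"
  by (cases n) (auto simp: dig_def)

lemma gb_partial:
  assumes "d > 1"
  shows "(\<Sum>i<Suc n. real (gb d i) / d ^ i) = 1 - gx d n / d ^ n"
proof (induction n)
  case 0 then show ?case by simp
next
  case (Suc n)
  have "(\<Sum>i<Suc (Suc n). real (gb d i) / d ^ i) = 1 - gx d n / d ^ n + real (dig d (gx d n)) / d ^ Suc n"
    using Suc by simp
  also have "\<dots> = 1 - gx d (Suc n) / d ^ Suc n" using assms by (simp add: field_simps)
  finally show ?case .
qed


lemma gb_sums:
  assumes "d > 1"
  shows "(\<lambda>i. real (gb d i) / d ^ i) sums 1"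
proof -
  define C where "C = of_int \<lfloor>d\<rfloor> / (d - 1)"
  have "(\<lambda>n. C * (1 / d) ^ n) \<longlonglongrightarrow> C * 0"
    using assms by (intro tendsto_mult tendsto_const LIMSEQ_power_zero) auto
  hence lim0: "(\<lambda>n. C * (1 / d) ^ n) \<longlonglongrightarrow> 0" by simp
  have bnd: "\<And>n. 0 \<le> gx d n / d ^ n \<and> gx d n / d ^ n \<le> C * (1 / d) ^ n"
  proof -
    fix n
    have "0 \<le> gx d n" "gx d n \<le> C" using gx_bounds[OF assms] C_def by auto
    moreover have "d ^ n > 0" using assms by simp
    ultimately show "0 \<le> gx d n / d ^ n \<and> gx d n / d ^ n \<le> C * (1 / d) ^ n"
      by (simp add: power_one_over divide_right_mono)
  qed
  have "(\<lambda>n. gx d n / d ^ n) \<longlonglongrightarrow> 0"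
    by (rule real_tendsto_sandwich[OF _ _ tendsto_const lim0]) (use bnd in auto)
  hence "(\<lambda>n. 1 - gx d n / d ^ n) \<longlonglongrightarrow> 1 - 0" by (intro tendsto_diff tendsto_const)
  hence "(\<lambda>n. \<Sum>i<Suc n. real (gb d i) / d ^ i) \<longlonglongrightarrow> 1"
    using gb_partial[OF assms] by simp
  hence "(\<lambda>n. \<Sum>i<n. real (gb d i) / d ^ i) \<longlonglongrightarrow> 1"
    by (rule LIMSEQ_imp_Suc)
  thus ?thesis by (simp add: sums_def)
qed

lemma gx_rat:
  fixes p q :: int
  assumes "d = of_int p / of_int q" "q > 0" "coprime p q"
  shows "\<exists>N::int. gx d n = of_int N / of_int q ^ n \<and> coprime N q"
proof (induction n)
  case 0 then show ?case by (intro exI[of _ 1]) simp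
next
  case (Suc n)
  then obtain N where N: "gx d n = of_int N / of_int q ^ n" "coprime N q" by blast
  define D where "D = int (dig d (gx d n))"
  define M where "M = p * N - D * q ^ Suc n"
  have "gx d (Suc n) = d * (of_int N / of_int q ^ n) - of_int D"
    by (simp add: N(1) D_def)
  also have "\<dots> = of_int M / of_int q ^ Suc n"
    using assms(2) unfolding assms(1) by (simp add: M_def field_simps)
  finally have "gx d (Suc n) = of_int M / of_int q ^ Suc n" .
  moreover have "coprime M q"
  proof -
    have "coprime (p * N) q" using N(2) assms(3) by simp
    hence "coprime (p * N + (- D * q ^ n) * q) q" 
    proof -
      have "(p * N + (- D * q ^ n) * q) mod q = (p * N) mod q" by (rule mod_mult_self1)
      thus ?thesis using \<open>coprime (p * N) q\<close> assms(2)
        by (metis coprime_mod_left_iff less_irrefl)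
    qed
    thus ?thesis unfolding M_def by (simp add: algebra_simps)
  qed
  ultimately show ?case by blast
qed

lemma gx_inj:
  fixes p q :: int
  assumes "d = of_int p / of_int q" "q > 1" "coprime p q" "m < n"
  shows "gx d m \<noteq> gx d n"
proof
  assume eq: "gx d m = gx d n"
  obtain M where M: "gx d m = of_int M / of_int q ^ m" "coprime M q"
    using gx_rat[OF assms(1) _ assms(3)] assms(2) by force
  obtain N where N: "gx d n = of_int N / of_int q ^ n" "coprime N q"
    using gx_rat[OF assms(1) _ assms(3)] assms(2) by force
  have qn: "(of_int q :: real) ^ n = of_int q ^ m * of_int q ^ (n - m)"
    using assms(4) by (simp flip: power_add)
  have "(of_int N :: real) = of_int M * of_int q ^ (n - m)"
    using eq M(1) N(1) assms(2) qn by (simp add: field_simps)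
  hence "N = M * q ^ (n - m)" by (metis of_int_eq_iff of_int_mult of_int_power)
  hence "q dvd N" using assms(4) by (simp add: dvd_power)
  hence "is_unit q" using N(2) by (metis coprime_absorb_left coprime_commute)
  thus False using assms(2) by simp
qed


definition conc :: "nat \<Rightarrow> (nat \<Rightarrow> 'a) \<Rightarrow> (nat \<Rightarrow> 'a) \<Rightarrow> nat \<Rightarrow> 'a" where
  "conc k u v = (\<lambda>i. if i < k then u i else v (i - k))"

lemma DS_summable:
  assumes "d > 1" "\<And>i. u i \<le> M"
  shows "summable (\<lambda>i. real (u i) / d ^ i)"
proof (rule summable_comparison_test[where g = "\<lambda>i. real M * (1 / d) ^ i"])
  show "\<exists>N. \<forall>n\<ge>N. norm (real (u n) / d ^ n) \<le> real M * (1 / d) ^ n"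
    using assms by (auto simp: power_one_over intro!: divide_right_mono)
  show "summable (\<lambda>i. real M * (1 / d) ^ i)"
    using assms by (intro summable_mult summable_geometric) auto
qed

lemma DS_conc:
  assumes "d > 1" "\<And>i. u i \<le> M" "\<And>i. v i \<le> M"
  shows "DS (conc k u v) d = (\<Sum>i<k. real (u i) / d ^ i) + DS v d / d ^ k"
proof -
  have b: "\<And>i. conc k u v i \<le> M" using assms unfolding conc_def by auto
  have s: "summable (\<lambda>i. real (conc k u v i) / d ^ i)" by (rule DS_summable[OF assms(1) b])
  have "DS (conc k u v) d = (\<Sum>n. real (conc k u v (n + k)) / d ^ (n + k)) + (\<Sum>i<k. real (conc k u v i) / d ^ i)"
    unfolding DS_def by (rule suminf_split_initial_segment[OF s])
  also have "(\<Sum>n. real (conc k u v (n + k)) / d ^ (n + k)) = (\<Sum>n. (real (v n) / d ^ n) / d ^ k)"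
    by (simp add: conc_def power_add)
  also have "\<dots> = DS v d / d ^ k"
    unfolding DS_def by (rule suminf_divide[OF DS_summable[OF assms(1) assms(3)]])
  also have "(\<Sum>i<k. real (conc k u v i) / d ^ i) = (\<Sum>i<k. real (u i) / d ^ i)"
    by (rule sum.cong) (auto simp: conc_def)
  finally show ?thesis by simp
qed

definition reach :: "(nat \<times> 'a \<times> nat) set \<Rightarrow> nat set \<Rightarrow> nat \<Rightarrow> (nat \<Rightarrow> 'a) \<Rightarrow> nat set" where
  "reach delta I k w = {s. \<exists>r. r 0 \<in> I \<and> (\<forall>i<k. (r i, w i, r (Suc i)) \<in> delta) \<and> r k = s}"

lemma reach_sub:
  assumes "I \<subseteq> Q" "delta \<subseteq> Q \<times> Al \<times> Q"
  shows "reach delta I k w \<subseteq> Q"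
proof
  fix s assume "s \<in> reach delta I k w"
  then obtain r where r: "r 0 \<in> I" "\<forall>i<k. (r i, w i, r (Suc i)) \<in> delta" "r k = s"
    unfolding reach_def by blast
  show "s \<in> Q"
  proof (cases k)
    case 0 then show ?thesis using r assms by auto
  next
    case (Suc j)
    then have "(r j, w j, r k) \<in> delta" using r by auto
    then show ?thesis using r assms by auto
  qed
qed

lemma glue:
  assumes "reach delta I k u = reach delta I k' u'"
    and "buchi_accepts Q Al I delta F (conc k u z)"
  shows "buchi_accepts Q Al I delta F (conc k' u' z)"
proof -
  obtain r where r0: "r 0 \<in> I" and rt: "\<forall>i. (r i, conc k u z i, r (Suc i)) \<in> delta"
    and rF: "\<exists>\<^sub>\<infinity>i. r i \<in> F"
    using assms(2) unfolding buchi_accepts_def by blast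
  have "r k \<in> reach delta I k u"
    unfolding reach_def using r0 rt by (auto simp: conc_def intro!: exI[of _ r]) (metis)
  hence "r k \<in> reach delta I k' u'" using assms(1) by simp
  then obtain r' where r'0: "r' 0 \<in> I" and r't: "\<forall>i<k'. (r' i, u' i, r' (Suc i)) \<in> delta"
    and r'k: "r' k' = r k"
    unfolding reach_def by blast
  define r'' where "r'' = (\<lambda>i. if i < k' then r' i else r (i - k' + k))"
  have "r'' 0 \<in> I" using r'0 r0 r'k by (auto simp: r''_def)
  moreover have "\<forall>i. (r'' i, conc k' u' z i, r'' (Suc i)) \<in> delta"
  proof
    fix i
    show "(r'' i, conc k' u' z i, r'' (Suc i)) \<in> delta"
    proof (cases "i < k'")
      case True
      then show ?thesis using r't r'k
      proof (cases "Suc i < k'")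
        case False
        then have "Suc i = k'" using True by simp
        then show ?thesis using r't r'k True by (auto simp: r''_def conc_def)
      qed (auto simp: r''_def conc_def)
    next
      case False
      have "(r (i - k' + k), conc k u z (i - k' + k), r (Suc (i - k' + k))) \<in> delta" using rt by blast
      moreover have "conc k u z (i - k' + k) = conc k' u' z i" 
      proof -
        have "\<not> (i - k' + k < k)" "i - k' + k - k = i - k'" using False by auto
        thus ?thesis using False unfolding conc_def by (simp only: if_False)
      qed
      moreover have "Suc (i - k' + k) = Suc i - k' + k" using False by simp
      ultimately show ?thesis using False by (simp add: r''_def)
    qed
  qed
  moreover have "\<exists>\<^sub>\<infinity>i. r'' i \<in> F"
    unfolding cofinite_eq_sequentially frequently_sequentially
  proof
    fix M
    obtain n where n: "n \<ge> M + k" "r n \<in> F" using rF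
      unfolding cofinite_eq_sequentially frequently_sequentially by blast
    have "\<not> (n - k + k' < k')" "n - k + k' - k' + k = n" using n by auto
    hence "r'' (n - k + k') = r n" unfolding r''_def by (simp only: if_False)
    moreover have "n - k + k' \<ge> M" using n by simp
    ultimately show "\<exists>n\<ge>M. r'' n \<in> F" using n by metis
  qed
  ultimately show ?thesis unfolding buchi_accepts_def by blast
qed


lemma DS_gb: "d > 1 \<Longrightarrow> DS (gb d) d = 1"
  unfolding DS_def using gb_sums by (metis sums_unique)

lemma DS_gb_tail:
  assumes "d > 1"
  shows "DS (\<lambda>i. gb d (i + Suc n)) d = d * gx d n"
proof -
  have e: "gb d = conc (Suc n) (gb d) (\<lambda>i. gb d (i + Suc n))"
    unfolding conc_def by (rule ext) (simp del: gb.simps)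
  have "1 = DS (gb d) d" using DS_gb[OF assms] by simp
  also have "\<dots> = (\<Sum>i<Suc n. real (gb d i) / d ^ i) + DS (\<lambda>i. gb d (i + Suc n)) d / d ^ Suc n"
    by (subst e, rule DS_conc[OF assms gb_le gb_le])
  also have "\<dots> = 1 - gx d n / d ^ n + DS (\<lambda>i. gb d (i + Suc n)) d / d ^ Suc n"
    by (simp only: gb_partial[OF assms])
  finally have "DS (\<lambda>i. gb d (i + Suc n)) d / d ^ Suc n = gx d n / d ^ n" by simp
  thus ?thesis using assms by (simp add: field_simps)
qed

lemma DS_gb_mix:
  assumes "d > 1"
  shows "DS (conc (Suc m) (gb d) (\<lambda>i. gb d (i + Suc n))) d = 1 + (gx d n - gx d m) / d ^ m"
proof -
  have "DS (conc (Suc m) (gb d) (\<lambda>i. gb d (i + Suc n))) d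
      = (\<Sum>i<Suc m. real (gb d i) / d ^ i) + DS (\<lambda>i. gb d (i + Suc n)) d / d ^ Suc m"
    by (rule DS_conc[OF assms gb_le gb_le])
  also have "\<dots> = 1 - gx d m / d ^ m + d * gx d n / d ^ Suc m"
    by (simp only: gb_partial[OF assms] DS_gb_tail[OF assms])
  also have "\<dots> = 1 + (gx d n - gx d m) / d ^ m" using assms by (simp add: field_simps)
  finally show ?thesis .
qed

theorem theorem7:
  fixes d :: real and mu :: nat and R :: "real \<Rightarrow> real \<Rightarrow> bool"
  assumes "d \<in> \<rat>" and "d \<notin> \<int>" and "d > 1"
    and "int mu \<ge> \<lceil>d\<rceil> - 1"
    and "R \<in> {(\<le>), (<), (\<ge>), (>), (=), (\<noteq>)}"
  shows "\<not> omega_regular ({0..mu} \<times> {0..mu}) (DS_comparator mu d R)"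
proof
  assume reg: "omega_regular ({0..mu} \<times> {0..mu}) (DS_comparator mu d R)"
  define Al where "Al = {0..mu} \<times> {0..mu}"
  obtain p q :: int where pq: "q > 0" "coprime p q" "d = of_int p / of_int q"
    using Rats_cases'[OF assms(1)] by blast
  have q1: "q > 1"
  proof (rule ccontr)
    assume "\<not> q > 1"
    hence "q = 1" using pq by simp
    hence "d = of_int p" using pq by simp
    thus False using assms(2) by simp
  qed
  have fl: "of_int \<lfloor>d\<rfloor> < d"
  proof -
    have "d \<noteq> of_int \<lfloor>d\<rfloor>" using assms(2) by (metis Ints_of_int)
    thus ?thesis using of_int_floor_le[of d] by (metis order_le_neq_trans)
  qed
  have "\<lfloor>d\<rfloor> < \<lceil>d\<rceil>" using fl le_of_int_ceiling[of d]
    by (metis less_le_trans of_int_less_iff)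
  hence mu1: "int mu \<ge> \<lfloor>d\<rfloor>" using assms(4) by linarith
  have fl1: "\<lfloor>d\<rfloor> \<ge> 1" using assms(3) by simp
  define A :: "nat \<Rightarrow> nat" where "A = (\<lambda>i. if i = 0 then 1 else 0)"
  define B where "B = gb d"
  define W where "W = (\<lambda>i. (A i, B i))"
  have Ble: "\<And>i. B i \<le> mu" unfolding B_def using gb_le mu1 by (meson le_trans nat_le_iff)
  have "mu \<ge> 1" using mu1 fl1 by linarith
  hence Ale: "\<And>i. A i \<le> mu" unfolding A_def by auto
  have WAl: "\<And>i. W i \<in> Al" using Ale Ble by (simp add: W_def Al_def)
  have DSA: "DS A d = 1"
  proof -
    have "(\<lambda>i. real (A i) / d ^ i) = (\<lambda>i. if i = 0 then 1 else 0)" by (auto simp: A_def fun_eq_iff)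
    thus ?thesis unfolding DS_def using sums_single[of 0 "\<lambda>_. 1::real"] by (metis sums_unique)
  qed
  obtain Q I delta F where aut: "finite Q" "I \<subseteq> Q" "F \<subseteq> Q" "delta \<subseteq> Q \<times> Al \<times> Q"
    and L: "DS_comparator mu d R = {w. (\<forall>i. w i \<in> Al) \<and> buchi_accepts Q Al I delta F w}"
    using reg unfolding omega_regular_def Al_def by blast
  have mem: "\<And>w :: nat \<Rightarrow> nat \<times> nat. (\<forall>i. w i \<in> Al) \<Longrightarrow>
      buchi_accepts Q Al I delta F w \<longleftrightarrow> R (DS (fst \<circ> w) d) (DS (snd \<circ> w) d)"
  proof -
    fix w :: "nat \<Rightarrow> nat \<times> nat" assume w: "\<forall>i. w i \<in> Al"
    have "buchi_accepts Q Al I delta F w \<longleftrightarrow> w \<in> DS_comparator mu d R" using L w by auto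
    also have "\<dots> \<longleftrightarrow> R (DS (fst \<circ> w) d) (DS (snd \<circ> w) d)"
      using w unfolding DS_comparator_def Al_def by auto
    finally show "buchi_accepts Q Al I delta F w \<longleftrightarrow> R (DS (fst \<circ> w) d) (DS (snd \<circ> w) d)" .
  qed
  define rho where "rho = (\<lambda>n. reach delta I (Suc n) W)"
  have E: "R 1 1 \<longleftrightarrow> R 1 (1 + (gx d n - gx d m) / d ^ m)" if "rho m = rho n" for m n
  proof -
    define z where "z = (\<lambda>i. W (i + Suc n))"
    have c1: "conc (Suc n) W z = W" by (auto simp: conc_def z_def fun_eq_iff)
    have c2Al: "\<forall>i. conc (Suc m) W z i \<in> Al" using WAl by (auto simp: conc_def z_def)
    have "buchi_accepts Q Al I delta F (conc (Suc n) W z) \<longleftrightarrow>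
          buchi_accepts Q Al I delta F (conc (Suc m) W z)"
      using glue[of delta I "Suc n" W "Suc m" W Q Al F z] glue[of delta I "Suc m" W "Suc n" W Q Al F z]
        that unfolding rho_def by auto
    moreover have "buchi_accepts Q Al I delta F (conc (Suc n) W z) \<longleftrightarrow> R 1 1"
    proof -
      have "fst \<circ> W = A" "snd \<circ> W = B" by (auto simp: W_def)
      thus ?thesis using mem[of W] WAl c1 DSA DS_gb[OF assms(3)] B_def by simp
    qed
    moreover have "buchi_accepts Q Al I delta F (conc (Suc m) W z) \<longleftrightarrow>
        R 1 (1 + (gx d n - gx d m) / d ^ m)"
    proof -
      have "fst \<circ> conc (Suc m) W z = A" by (auto simp: conc_def z_def W_def A_def fun_eq_iff)
      moreover have "snd \<circ> conc (Suc m) W z = conc (Suc m) (gb d) (\<lambda>i. gb d (i + Suc n))"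
        by (auto simp: conc_def z_def W_def B_def fun_eq_iff)
      ultimately show ?thesis using mem[OF c2Al] DSA DS_gb_mix[OF assms(3)] by simp
    qed
    ultimately show ?thesis by simp
  qed
  have "\<not> inj rho"
  proof
    assume "inj rho"
    moreover have "finite (range rho)"
    proof (rule finite_subset)
      show "range rho \<subseteq> Pow Q" unfolding rho_def using reach_sub[OF aut(2) aut(4)] by auto
    qed (use aut(1) in simp)
    ultimately have "finite (UNIV :: nat set)" using finite_imageD by blast
    thus False by simp
  qed
  then obtain m n where mn: "rho m = rho n" "m < n"
    unfolding inj_def by (metis linorder_neqE_nat)
  have ne: "gx d m \<noteq> gx d n" by (rule gx_inj[OF pq(3) q1 pq(2) mn(2)])
  define e1 where "e1 = (gx d n - gx d m) / d ^ m"
  define e2 where "e2 = (gx d m - gx d n) / d ^ n"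
  have E1: "R 1 1 \<longleftrightarrow> R 1 (1 + e1)" using E[OF mn(1)] e1_def by simp
  have E2: "R 1 1 \<longleftrightarrow> R 1 (1 + e2)" using E[OF mn(1)[symmetric]] e2_def by simp
  have pos: "d ^ m > 0" "d ^ n > 0" using assms(3) by auto
  have sg: "(e1 > 0 \<and> e2 < 0) \<or> (e1 < 0 \<and> e2 > 0)"
  proof (cases "gx d m < gx d n")
    case True then show ?thesis using pos by (simp add: e1_def e2_def divide_pos_pos divide_neg_pos)
  next
    case False then have "gx d n < gx d m" using ne by simp
    then show ?thesis using pos by (simp add: e1_def e2_def divide_pos_pos divide_neg_pos)
  qed
  show False using assms(5) E1 E2 sg by auto
qed

end
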